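(* Let $\mathcal{S}\subset\mathbb{R}^3$ be a smooth, closed, orientable surface and let $\mathcal{R}:\mathcal{S}\to(0,\infty)$ be a smooth radius function. Let $p\in\mathcal{S}$ be a point that contributes to the variable-radius offset surface $\mathcal{S}^{\mathrm{off}}_{\mathcal{R}}$, with corresponding offset point $p^{\mathrm{off}}_{\mathcal{R}}$ and offset direction $\boldsymbol{n}^{\mathrm{off}}_{\mathcal{R}}(p)$, and let $\boldsymbol{n}_p$ be the unit normal of $\mathcal{S}$ at $p$ pointing to the side of the offset layer under consideration. If $\|\nabla\mathcal{R}(p)\|\le 1$, then $\boldsymbol{n}^{\mathrm{off}}_{\mathcal{R}}(p)$ is obtained by rotating $\boldsymbol{n}_p$ by the angle $\alpha=\arcsin(\|\nabla\mathcal{R}(p)\|)$ about the axis $$\frac{\nabla\mathcal{R}(p)}{\|\nabla\mathcal{R}(p)\|}\times\boldsymbol{n}_p .$$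
   Context: $\nabla\mathcal{R}(p)$ denotes the surface (tangential) gradient of $\mathcal{R}$ at $p$. The variable-radius offset surface $\mathcal{S}^{\mathrm{off}}_{\mathcal{R}}$ is the zero level set of $\phi(x)=\min_{q\in\mathcal{S}}\big(\|x-q\|-\mathcal{R}(q)\big)$, i.e. the envelope of the family of balls centered at $q\in\mathcal{S}$ with radius $\mathcal{R}(q)$; it consists of an inward and an outward layer. A point $p\in\mathcal{S}$ contributes to $\mathcal{S}^{\mathrm{off}}_{\mathcal{R}}$ if there is a point $p^{\mathrm{off}}_{\mathcal{R}}\in\mathcal{S}^{\mathrm{off}}_{\mathcal{R}}$ on the sphere of center $p$ and radius $\mathcal{R}(p)$ (a point where this sphere touches the envelope), and the offset direction is the unit vector $\boldsymbol{n}^{\mathrm{off}}_{\mathcal{R}}(p)=(p^{\mathrm{off}}_{\mathcal{R}}-p)/\|p^{\mathrm{off}}_{\mathcal{R}}-p\|$. Rotation about an axis is by the right-hand rule; when $\nabla\mathcal{R}(p)=0$ the angle $\alpha$ is $0$ and the rotation is the identity. *)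

theory Defs
  imports "HOL-Analysis.Analysis"
begin

definition grad3 :: "(real^3 \<Rightarrow> real) \<Rightarrow> real^3 \<Rightarrow> real^3" where
  "grad3 f x = (\<chi> i. frechet_derivative f (at x) (axis i 1))"

fun Ck3 :: "nat \<Rightarrow> (real^3 \<Rightarrow> real) \<Rightarrow> bool" where
  "Ck3 0 f = continuous_on UNIV f"
| "Ck3 (Suc k) f = (f differentiable_on UNIV \<and>
      (\<forall>i. Ck3 k (\<lambda>x. frechet_derivative f (at x) (axis i 1))))"

definition smooth3 :: "(real^3 \<Rightarrow> real) \<Rightarrow> bool" where
  "smooth3 f = (\<forall>k. Ck3 k f)"

text \<open>A smooth closed (compact, boundaryless, connected) orientable surface in R^3,
  presented as a regular level set of a smooth function F.\<close>
definition closed_surface_by :: "(real^3 \<Rightarrow> real) \<Rightarrow> (real^3) set \<Rightarrow> bool" where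
  "closed_surface_by F S = (smooth3 F \<and> S = {x. F x = 0} \<and> S \<noteq> {} \<and> compact S \<and>
      connected S \<and> (\<forall>x\<in>S. grad3 F x \<noteq> 0))"

definition unit_normal :: "(real^3 \<Rightarrow> real) \<Rightarrow> real^3 \<Rightarrow> real^3" where
  "unit_normal F p = grad3 F p /\<^sub>R norm (grad3 F p)"

text \<open>Surface (tangential) gradient of R at p: projection of the ambient gradient of a
  smooth extension of R onto the tangent plane.\<close>
definition surf_grad :: "(real^3 \<Rightarrow> real) \<Rightarrow> (real^3 \<Rightarrow> real) \<Rightarrow> real^3 \<Rightarrow> real^3" where
  "surf_grad F R p = grad3 R p - (grad3 R p \<bullet> unit_normal F p) *\<^sub>R unit_normal F p"

definition offset_fun :: "(real^3) set \<Rightarrow> (real^3 \<Rightarrow> real) \<Rightarrow> real^3 \<Rightarrow> real" where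
  "offset_fun S R x = (INF q\<in>S. norm (x - q) - R q)"

definition offset_surface :: "(real^3) set \<Rightarrow> (real^3 \<Rightarrow> real) \<Rightarrow> (real^3) set" where
  "offset_surface S R = {x. offset_fun S R x = 0}"

text \<open>Rotation of v by angle a about the unit axis k (right-hand rule, Rodrigues formula).\<close>
definition rotate_about :: "real^3 \<Rightarrow> real \<Rightarrow> real^3 \<Rightarrow> real^3" where
  "rotate_about k a v = cos a *\<^sub>R v + sin a *\<^sub>R (cross3 k v) + ((1 - cos a) * (k \<bullet> v)) *\<^sub>R k"

end

theory Submission
  imports Defs
begin

lemma cross_cross_left: "cross3 (cross3 a b) c = (a \<bullet> c) *\<^sub>R b - (b \<bullet> c) *\<^sub>R a"
  by (simp add: cross3_simps forall_3)

lemma linear_inner_grad: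
  fixes L :: "real^3 \<Rightarrow> real"
  assumes "linear L"
  shows "L h = (\<chi> i. L (axis i 1)) \<bullet> h"
proof -
  have "L h = L (\<Sum>i\<in>UNIV. h$i *\<^sub>R axis i 1)"
    using basis_expansion[of h] by (simp add: scalar_mult_eq_scaleR)
  also have "\<dots> = (\<Sum>i\<in>UNIV. h$i * L (axis i 1))"
    using assms by (simp add: linear_sum linear_scale)
  also have "\<dots> = (\<chi> i. L (axis i 1)) \<bullet> h"
    by (simp add: inner_vec_def mult.commute)
  finally show ?thesis .
qed

lemma smooth_deriv:
  assumes "smooth3 f"
  shows "(f has_derivative (\<lambda>h. grad3 f x \<bullet> h)) (at x)" and "continuous_on UNIV f"
proof -
  have "Ck3 (Suc 0) f" "Ck3 0 f" using assms unfolding smooth3_def by blast+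
  then have d: "f differentiable at x" and c: "continuous_on UNIV f"
    by (auto simp: differentiable_on_def)
  then have D: "(f has_derivative frechet_derivative f (at x)) (at x)"
    using frechet_derivative_works by blast
  then have "linear (frechet_derivative f (at x))"
    using has_derivative_linear by blast
  then have "frechet_derivative f (at x) = (\<lambda>h. grad3 f x \<bullet> h)"
    using linear_inner_grad unfolding grad3_def by (auto simp: fun_eq_iff)
  then show "(f has_derivative (\<lambda>h. grad3 f x \<bullet> h)) (at x)" using D by simp
  show "continuous_on UNIV f" by (fact c)
qed


lemma rot_alg:
  fixes sg n u :: "real^3"
  assumes n1: "n \<bullet> n = 1" and orth: "sg \<bullet> n = 0" and u: "u = - sg + \<nu> *\<^sub>R n"
    and nu: "\<nu> \<ge> 0" and un: "u \<bullet> u = 1" and small: "norm sg \<le> 1"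
  shows "u = rotate_about (cross3 (sg /\<^sub>R norm sg) n) (arcsin (norm sg)) n"
proof -
  let ?s = "norm sg"
  have "u \<bullet> u = sg \<bullet> sg + \<nu>^2"
    unfolding u using n1 orth by (simp add: algebra_simps inner_commute power2_eq_square)
  then have "\<nu>^2 = 1 - ?s^2" using un by (simp add: power2_norm_eq_inner)
  then have nu_eq: "\<nu> = sqrt (1 - ?s^2)" using nu by (metis real_sqrt_unique)
  have s1: "-1 \<le> ?s" "?s \<le> 1" using small norm_ge_zero[of sg] by linarith+
  have cs: "cos (arcsin ?s) = sqrt (1 - ?s^2)" using s1 by (simp add: cos_arcsin)
  have sn: "sin (arcsin ?s) = ?s" using s1 by simp
  let ?g = "sg /\<^sub>R ?s"
  have k0: "cross3 ?g n \<bullet> n = 0" by (simp add: dot_cross_self)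
  have kn: "cross3 (cross3 ?g n) n = - ?g"
    using n1 orth by (simp add: cross_cross_left)
  have "?s *\<^sub>R ?g = sg" by (cases "sg = 0") auto
  then show ?thesis
    unfolding rotate_about_def cs sn k0 kn u nu_eq by (simp add: algebra_simps)
qed

theorem theorem1:
  fixes F R :: "real^3 \<Rightarrow> real" and S :: "(real^3) set" and p poff np :: "real^3"
  assumes surf: "closed_surface_by F S"
    and Rsmooth: "smooth3 R"
    and Rpos: "\<forall>q\<in>S. R q > 0"
    and pS: "p \<in> S"
    and poff: "poff \<in> offset_surface S R"
    and onsphere: "norm (poff - p) = R p"
    and np: "np = unit_normal F p \<or> np = - unit_normal F p"
    and side: "(poff - p) \<bullet> np \<ge> 0"
    and small: "norm (surf_grad F R p) \<le> 1"
  shows "(poff - p) /\<^sub>R norm (poff - p) =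
         rotate_about (cross3 (surf_grad F R p /\<^sub>R norm (surf_grad F R p)) np)
                      (arcsin (norm (surf_grad F R p))) np"
proof -
  have Fs: "smooth3 F" and Sdef: "S = {x. F x = 0}" and cS: "compact S"
    and gF: "grad3 F p \<noteq> 0"
    using surf pS unfolding closed_surface_by_def by auto
  define a where "a = grad3 F p"
  define r where "r = grad3 R p"
  define w where "w = poff - p"
  define g where "g = (\<lambda>x. norm (poff - x) - R x)"
  have w0: "w \<noteq> 0" using onsphere Rpos pS unfolding w_def by auto
  have DF: "(F has_derivative (\<lambda>h. a \<bullet> h)) (at p)" and cF: "continuous_on UNIV F"
    using smooth_deriv[OF Fs] unfolding a_def by auto
  have DR: "(R has_derivative (\<lambda>h. r \<bullet> h)) (at p)" and cR: "continuous_on UNIV R"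
    using smooth_deriv[OF Rsmooth] unfolding r_def by auto
  define b where "b = - sgn w - r"
  have Dn: "(norm has_derivative (\<lambda>h. h \<bullet> sgn w)) (at w)"
    using has_derivative_norm[OF w0] .
  have Dm: "((\<lambda>x. poff - x) has_derivative (\<lambda>h. - h)) (at p)"
    by (auto intro!: derivative_eq_intros)
  have "((\<lambda>x. norm (poff - x)) has_derivative (\<lambda>h. (- h) \<bullet> sgn w)) (at p)"
    using has_derivative_compose[OF Dm Dn[unfolded w_def]] unfolding w_def by (simp add: o_def)
  then have Dg: "(g has_derivative (\<lambda>h. b \<bullet> h)) (at p)"
    unfolding g_def b_def using DR
    by (auto intro!: derivative_eq_intros simp: algebra_simps inner_commute)
  have cg: "continuous_on UNIV g" unfolding g_def
    by (intro continuous_intros cR)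
  have gp: "g p = 0" using onsphere unfolding g_def w_def by simp
  have bdd: "bdd_below (g ` S)"
    using compact_continuous_image[OF continuous_on_subset[OF cg] cS]
    by (auto intro: bounded_imp_bdd_below compact_imp_bounded)
  have inf0: "(INF q\<in>S. g q) = 0"
    using poff unfolding offset_surface_def offset_fun_def g_def by simp
  have gmin: "g q \<ge> 0" if "q \<in> S" for q
    using cINF_lower[OF bdd that] inf0 by simp
  define D where "D = (a \<bullet> a) * (b \<bullet> b) - (a \<bullet> b)^2"
  have D0: "D = 0"
  proof (rule ccontr)
    assume "D \<noteq> 0"
    define c where "c = ((b \<bullet> b) / D) *\<^sub>R a - ((a \<bullet> b) / D) *\<^sub>R b"
    define d where "d = ((a \<bullet> a) / D) *\<^sub>R b - ((a \<bullet> b) / D) *\<^sub>R a"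
    have Dq: "D = (a \<bullet> a) * (b \<bullet> b) - (a \<bullet> b) * (a \<bullet> b)"
      unfolding D_def by (simp add: power2_eq_square)
    have "a \<bullet> c = ((b \<bullet> b) * (a \<bullet> a) - (a \<bullet> b) * (a \<bullet> b)) / D"
      unfolding c_def by (simp add: inner_diff_right inner_commute diff_divide_distrib)
    also have "\<dots> = 1" using \<open>D \<noteq> 0\<close> Dq by (simp add: mult.commute)
    finally have ac1: "a \<bullet> c = 1" .
    have ac2: "b \<bullet> c = 0"
      unfolding c_def by (simp add: inner_diff_right inner_commute diff_divide_distrib)
    have ac3: "a \<bullet> d = 0"
      unfolding d_def by (simp add: inner_diff_right inner_commute diff_divide_distrib)
    have "b \<bullet> d = ((a \<bullet> a) * (b \<bullet> b) - (a \<bullet> b) * (a \<bullet> b)) / D"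
      unfolding d_def by (simp add: inner_diff_right inner_commute diff_divide_distrib)
    also have "\<dots> = 1" using \<open>D \<noteq> 0\<close> Dq by (simp add: mult.commute)
    finally have ac4: "b \<bullet> d = 1" .
    note ac = ac1 ac2 ac3 ac4
    define G where "G = (\<lambda>z::real \<times> real. fst z *\<^sub>R c + snd z *\<^sub>R d)"
    have blG: "bounded_linear G" unfolding G_def
      by (intro bounded_linear_add bounded_linear_compose[OF bounded_linear_scaleR_left]
          bounded_linear_fst bounded_linear_snd)
    have id: "(\<lambda>h. (a \<bullet> h, b \<bullet> h)) \<circ> G = id"
      unfolding G_def using ac by (auto simp: fun_eq_iff inner_add_right)
    have Df: "((\<lambda>x. (F x, g x)) has_derivative (\<lambda>h. (a \<bullet> h, b \<bullet> h))) (at p)"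
      using DF Dg by (rule has_derivative_Pair)
    have cf: "continuous_on UNIV (\<lambda>x. (F x, g x))"
      using cF cg by (intro continuous_intros)
    have "(F p, g p) \<in> interior ((\<lambda>x. (F x, g x)) ` UNIV)"
      by (rule sussmann_open_mapping[OF open_UNIV cf _ Df blG id]) auto
    then have "(0, 0) \<in> interior ((\<lambda>x. (F x, g x)) ` UNIV)"
      using pS Sdef gp by auto
    then obtain e where e: "e > 0" "ball (0, 0) e \<subseteq> (\<lambda>x. (F x, g x)) ` UNIV"
      unfolding mem_interior by blast
    have "(0, - e/2) \<in> ball (0::real, 0::real) e"
      using e by (simp add: dist_Pair_Pair dist_real_def)
    then obtain x where "(0, - e/2) = (F x, g x)" using e by blast
    then have "x \<in> S" "g x < 0" using Sdef e by auto
    then show False using gmin by fastforce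
  qed
  have aa: "a \<bullet> a > 0" using gF unfolding a_def by simp
  define \<mu> where "\<mu> = (a \<bullet> b) / (a \<bullet> a)"
  have "(b - \<mu> *\<^sub>R a) \<bullet> (b - \<mu> *\<^sub>R a) = b \<bullet> b - 2 * \<mu> * (a \<bullet> b) + \<mu>^2 * (a \<bullet> a)"
    by (simp add: algebra_simps inner_commute power2_eq_square)
  also have "\<dots> = D / (a \<bullet> a)"
    unfolding \<mu>_def D_def using aa by (simp add: field_simps power2_eq_square)
  finally have "b = \<mu> *\<^sub>R a" using D0 by simp
  moreover have "sgn w = - r - b" unfolding b_def by simp
  ultimately have sw: "sgn w = - r - \<mu> *\<^sub>R a" by simp
  define n0 where "n0 = unit_normal F p"
  have n0: "n0 = a /\<^sub>R norm a" unfolding n0_def unit_normal_def a_def by simp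
  have n01: "n0 \<bullet> n0 = 1" using gF unfolding n0 a_def
    by (simp add: power2_norm_eq_inner[symmetric] divide_simps)
  define sg where "sg = surf_grad F R p"
  have sg: "sg = r - (r \<bullet> n0) *\<^sub>R n0" unfolding sg_def surf_grad_def r_def n0_def by simp
  have sgo: "sg \<bullet> n0 = 0" unfolding sg using n01 by (simp add: algebra_simps inner_commute)
  have an: "a = norm a *\<^sub>R n0" unfolding n0 using gF a_def by simp
  define \<kappa> where "\<kappa> = - (r \<bullet> n0) - \<mu> * norm a"
  have u0: "sgn w = - sg + \<kappa> *\<^sub>R n0"
    unfolding sw sg \<kappa>_def by (subst an) (simp add: algebra_simps)
  have npn: "np \<bullet> np = 1" "sg \<bullet> np = 0"
    using np n01 sgo unfolding n0_def by auto
  have "\<exists>\<nu>. sgn w = - sg + \<nu> *\<^sub>R np"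
  proof (cases "np = n0")
    case True then show ?thesis using u0 by blast
  next
    case False
    then have "np = - n0" using np unfolding n0_def by blast
    then have "sgn w = - sg + (- \<kappa>) *\<^sub>R np" using u0 by simp
    then show ?thesis by blast
  qed
  then obtain \<nu> where u1: "sgn w = - sg + \<nu> *\<^sub>R np" by blast
  have "sgn w \<bullet> np = \<nu>" unfolding u1 using npn by (simp add: algebra_simps inner_commute)
  moreover have "sgn w \<bullet> np \<ge> 0" using side unfolding w_def[symmetric] sgn_div_norm
    by (simp add: divide_nonneg_pos)
  ultimately have nu: "\<nu> \<ge> 0" by simp
  have uu: "sgn w \<bullet> sgn w = 1" using w0 by (simp add: power2_norm_eq_inner[symmetric] norm_sgn)
  have "sgn w = rotate_about (cross3 (sg /\<^sub>R norm sg) np) (arcsin (norm sg)) np"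
    using rot_alg[OF npn(1) npn(2) u1 nu uu] small unfolding sg_def by simp
  then show ?thesis unfolding sg_def w_def sgn_div_norm by simp
qed

end
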